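(* Let $p$ be a prime and write $T_p(z)=\prod_{j=1}^{\infty}(1-z^{p^{j}})^{-1/p^{j}}=\sum_{n\ge0}t_p(n)z^n$ for $|z|<1$. For all $n\ge0$, the coefficient $t_p(n)$ is a rational number whose denominator contains no prime factor other than $p$; that is, \[ t_p(n)\in\left\{\frac{a}{p^k}: a\in\mathbb{Z},\ k\ge 0\right\}. \]
   Context: For $|z|<1$, each factor $(1-z^{p^j})^{-1/p^j}$ is defined using the principal branch; the product converges absolutely and defines an analytic function on the open unit disk, whose Taylor expansion at $0$ has coefficients $t_p(n)$. *)

theory Defs
  imports "HOL-Analysis.Analysis" "HOL-Computational_Algebra.Primes"
begin

text \<open>T_p(z) = prod_{j>=1} (1 - z^(p^j))^(-1/p^j), principal branch (complex powr uses Ln).\<close>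
definition Tp :: "nat \<Rightarrow> complex \<Rightarrow> complex" where
  "Tp p z = prodinf (\<lambda>j. (1 - z ^ (p ^ Suc j)) powr (- 1 / of_nat (p ^ Suc j)))"

definition tp :: "nat \<Rightarrow> nat \<Rightarrow> complex" where
  "tp p n = (deriv ^^ n) (Tp p) 0 / fact n"

end

theory Submission
  imports Defs "HOL-Complex_Analysis.Complex_Analysis"
begin


definition inR :: "nat \<Rightarrow> complex \<Rightarrow> bool" where
  "inR p x \<longleftrightarrow> (\<exists>a::int. \<exists>k::nat. x = of_int a / of_nat p ^ k)"

lemma inR_int: "inR p (of_int a)"
  unfolding inR_def by (rule exI[of _ a], rule exI[of _ 0]) simp

lemma inR_0: "inR p 0" using inR_int[of p 0] by simp
lemma inR_1: "inR p 1" using inR_int[of p 1] by simp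

lemma inR_add: assumes "p > 0" "inR p x" "inR p y" shows "inR p (x + y)"
proof -
  obtain a k b l where x: "x = of_int a / of_nat p ^ k" and y: "y = of_int b / of_nat p ^ l"
    using assms unfolding inR_def by blast
  have "x + y = of_int (a * int p ^ l + b * int p ^ k) / of_nat p ^ (k + l)"
    using assms(1) by (simp add: x y field_simps power_add)
  thus ?thesis unfolding inR_def by blast
qed

lemma inR_mult: assumes "p > 0" "inR p x" "inR p y" shows "inR p (x * y)"
proof -
  obtain a k b l where x: "x = of_int a / of_nat p ^ k" and y: "y = of_int b / of_nat p ^ l"
    using assms unfolding inR_def by blast
  have "x * y = of_int (a * b) / of_nat p ^ (k + l)"
    using assms(1) by (simp add: x y field_simps power_add)
  thus ?thesis unfolding inR_def by blast
qed

lemma inR_uminus: assumes "inR p x" shows "inR p (- x)"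
proof -
  obtain a k where x: "x = of_int a / of_nat p ^ k"
    using assms unfolding inR_def by blast
  have "- x = of_int (- a) / of_nat p ^ k" by (simp add: x)
  thus ?thesis unfolding inR_def by blast
qed

lemma inR_diff: assumes "p > 0" "inR p x" "inR p y" shows "inR p (x - y)"
  using inR_add[OF assms(1,2) inR_uminus[OF assms(3)]] by simp

lemma inR_div: assumes "inR p x" shows "inR p (x / of_nat p ^ e)"
proof -
  obtain a k where x: "x = of_int a / of_nat p ^ k"
    using assms unfolding inR_def by blast
  have "x / of_nat p ^ e = of_int a / of_nat p ^ (k + e)" by (simp add: x power_add)
  thus ?thesis unfolding inR_def by blast
qed

lemma inR_sum: assumes "p > 0" "\<And>i. i \<in> A \<Longrightarrow> inR p (f i)" shows "inR p (sum f A)"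
  using assms(2)
proof (induction A rule: infinite_finite_induct)
  case (infinite A) then show ?case by (simp add: inR_0)
next
  case empty then show ?case by (simp add: inR_0)
next
  case (insert x F) then show ?case by (simp add: inR_add[OF assms(1)])
qed

definition RC :: "nat \<Rightarrow> complex fps \<Rightarrow> bool" where
  "RC p F \<longleftrightarrow> (\<forall>n. inR p (fps_nth F n))"

lemma RC_mult: assumes "p > 0" "RC p F" "RC p G" shows "RC p (F * G)"
  using assms unfolding RC_def by (auto simp: fps_mult_nth intro!: inR_sum inR_mult)

lemma RC_one: "RC p 1"
  unfolding RC_def by (auto simp: inR_0 inR_1)

lemma RC_power: assumes "p > 0" "RC p F" shows "RC p (F ^ m)"
  by (induction m) (auto simp: RC_one RC_mult assms)

lemma RC_uminus: assumes "RC p F" shows "RC p (- F)"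
  using assms unfolding RC_def by (auto intro!: inR_uminus)

lemma RC_X: "RC p fps_X"
  unfolding RC_def by (auto simp: fps_X_def inR_0 inR_1)

lemma RC_compose: assumes "p > 0" "RC p F" "RC p G" shows "RC p (fps_compose F G)"
  using assms RC_power[OF assms(1,3)] unfolding RC_def
  by (auto simp: fps_compose_nth intro!: inR_sum inR_mult)

lemma RC_prod: assumes "p > 0" "\<And>i. i \<in> A \<Longrightarrow> RC p (F i)" shows "RC p (prod F A)"
  using assms(2)
proof (induction A rule: infinite_finite_induct)
  case (infinite A) then show ?case by (simp add: RC_one)
next
  case empty then show ?case by (simp add: RC_one)
next
  case (insert x F) then show ?case by (simp add: RC_mult[OF assms(1)])
qed

lemma low_mult:
  fixes F E :: "'a::comm_ring_1 fps"
  assumes "\<forall>k<n. fps_nth E k = 0"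
  shows "\<forall>k<n. fps_nth (F * E) k = 0" "fps_nth (F * E) n = fps_nth F 0 * fps_nth E n"
proof -
  show "\<forall>k<n. fps_nth (F * E) k = 0"
    using assms by (auto simp: fps_mult_nth intro!: sum.neutral)
  have "fps_nth (F * E) n = (\<Sum>i = 0..n. fps_nth F i * fps_nth E (n - i))"
    by (simp add: fps_mult_nth)
  also have "\<dots> = (\<Sum>i \<in> {0}. fps_nth F i * fps_nth E (n - i))"
    using assms by (intro sum.mono_neutral_right) auto
  finally show "fps_nth (F * E) n = fps_nth F 0 * fps_nth E n" by simp
qed

lemma power_coeff_aux:
  fixes A B :: "'a::comm_ring_1 fps"
  assumes "\<forall>k<n. fps_nth A k = fps_nth B k" "fps_nth B n = 0" "0 < n" "fps_nth A 0 = 1"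
  shows "(\<forall>k<n. fps_nth (A^m - B^m) k = 0) \<and> fps_nth (A^m - B^m) n = of_nat m * fps_nth A n"
proof (induction m)
  case 0 then show ?case by simp
next
  case (Suc m)
  have B0: "fps_nth B 0 = 1" using assms by metis
  have eq: "A^Suc m - B^Suc m = A * (A^m - B^m) + B^m * (A - B)"
    by (simp add: algebra_simps)
  have lowE: "\<forall>k<n. fps_nth (A - B) k = 0" using assms(1) by simp
  have l1: "\<forall>k<n. fps_nth (A * (A^m - B^m)) k = 0"
     "fps_nth (A * (A^m - B^m)) n = fps_nth A 0 * fps_nth (A^m - B^m) n"
    using low_mult[OF conjunct1[OF Suc.IH], of A] by auto
  have l2: "\<forall>k<n. fps_nth (B^m * (A - B)) k = 0"
     "fps_nth (B^m * (A - B)) n = fps_nth (B^m) 0 * fps_nth (A - B) n"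
    using low_mult[OF lowE, of "B^m"] by auto
  have "fps_nth (B^m) 0 = 1" using B0 by (simp add: fps_nth_power_0)
  then show ?case unfolding eq using l1 l2 Suc.IH assms(2,4)
    by (auto simp: algebra_simps)
qed

lemma power_coeff:
  fixes A B :: "'a::comm_ring_1 fps"
  assumes "\<forall>k<n. fps_nth A k = fps_nth B k" "fps_nth B n = 0" "0 < n" "fps_nth A 0 = 1"
  shows "fps_nth (A^m) n = fps_nth (B^m) n + of_nat m * fps_nth A n"
  using conjunct2[OF power_coeff_aux[OF assms, of m]] by (simp add: algebra_simps)

lemma root_RC:
  fixes G :: "complex fps"
  assumes p: "p > 0" and G0: "fps_nth G 0 = 1" and H: "RC p (G ^ (p ^ e))"
  shows "RC p G"
proof -
  have "inR p (fps_nth G n)" for n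
  proof (induction n rule: less_induct)
    case (less n)
    show ?case
    proof (cases "n = 0")
      case True then show ?thesis using G0 by (simp add: inR_1)
    next
      case False
      define B where "B = Abs_fps (\<lambda>k. if k < n then fps_nth G k else 0)"
      have RB: "RC p B" unfolding RC_def B_def using less by (auto simp: inR_0)
      have eq: "fps_nth (G^(p^e)) n = fps_nth (B^(p^e)) n + of_nat (p^e) * fps_nth G n"
        by (rule power_coeff) (use False G0 in \<open>auto simp: B_def\<close>)
      have "inR p (fps_nth (G^(p^e)) n - fps_nth (B^(p^e)) n)"
        using H RC_power[OF p RB, of "p^e"] p unfolding RC_def by (auto intro!: inR_diff)
      hence "inR p ((fps_nth (G^(p^e)) n - fps_nth (B^(p^e)) n) / of_nat p ^ e)"
        by (rule inR_div)
      also have "(fps_nth (G^(p^e)) n - fps_nth (B^(p^e)) n) / of_nat p ^ e = fps_nth G n"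
        using p by (simp add: eq)
      finally show ?thesis .
    qed
  qed
  thus ?thesis unfolding RC_def by blast
qed


lemma RC_binom:
  assumes p: "p > 0"
  shows "RC p (fps_binomial (- 1 / of_nat (p ^ e) :: complex))"
proof (rule root_RC[OF p, of _ e])
  show "fps_nth (fps_binomial (- 1 / of_nat (p ^ e) :: complex)) 0 = 1" by simp
  have "fps_binomial (- 1 / of_nat (p ^ e) :: complex) ^ (p ^ e) = fps_binomial (-1)"
    using p by (simp add: fps_binomial_power)
  moreover have "RC p (fps_binomial (-1 :: complex))"
  proof -
    have "((-1::complex) gchoose n) = of_int ((-1)^n)" for n
      by (subst gbinomial_negated_upper) (simp add: binomial_gbinomial[symmetric])
    thus ?thesis unfolding RC_def by (simp add: inR_int del: of_int_power)
  qed
  ultimately show "RC p (fps_binomial (- 1 / of_nat (p ^ e) :: complex) ^ p ^ e)" by simp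
qed

definition FF :: "nat \<Rightarrow> nat \<Rightarrow> complex fps" where
  "FF p j = fps_compose (fps_binomial (- 1 / of_nat (p ^ Suc j))) (- (fps_X ^ (p ^ Suc j)))"

lemma RC_FF: "p > 0 \<Longrightarrow> RC p (FF p j)"
  unfolding FF_def by (intro RC_compose RC_binom RC_uminus RC_power RC_X) auto

lemma nthpow: "fps_nth ((- (fps_X ^ M)) ^ i :: complex fps) k = (if k = M*i then (-1)^i else 0)"
proof -
  have m1: "(-1::complex fps) = fps_const (-1)" by simp
  have "(- (fps_X ^ M)) ^ i = ((-1) ^ i * (fps_X ^ M) ^ i :: complex fps)"
    by (rule power_minus)
  also have "(fps_X ^ M) ^ i = (fps_X ^ (M * i) :: complex fps)"
    by (simp only: power_mult)
  also have "((-1) ^ i :: complex fps) = fps_const ((-1)^i)"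
    unfolding m1 fps_const_power ..
  finally have eq: "(- (fps_X ^ M)) ^ i = fps_const ((-1)^i) * (fps_X ^ (M * i) :: complex fps)" .
  show ?thesis unfolding eq fps_mult_left_const_nth fps_X_power_nth by simp
qed

lemma FF_low:
  assumes "p > 0" "0 < k" "k < p ^ Suc j"
  shows "fps_nth (FF p j) k = 0"
proof -
  have "fps_nth (FF p j) k = (\<Sum>i = 0..k. fps_nth (fps_binomial (- 1 / of_nat (p ^ Suc j))) i *
          fps_nth ((- (fps_X ^ (p ^ Suc j))) ^ i) k)"
    unfolding FF_def by (rule fps_compose_nth)
  also have "\<dots> = 0"
  proof (rule sum.neutral, rule ballI)
    fix i assume i: "i \<in> {0..k}"
    have "k \<noteq> p ^ Suc j * i"
    proof (cases i)
      case 0 then show ?thesis using assms by simp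
    next
      case (Suc i')
      have "p ^ Suc j * 1 \<le> p ^ Suc j * i" using Suc by (intro mult_le_mono2) simp
      then show ?thesis using assms(3) by linarith
    qed
    then show "fps_nth (fps_binomial (- 1 / of_nat (p ^ Suc j))) i *
          fps_nth ((- (fps_X ^ (p ^ Suc j))) ^ i :: complex fps) k = 0"
      using nthpow[of "p ^ Suc j" i k] by (simp del: power_Suc)
  qed
  finally show ?thesis .
qed

lemma FF_0: "fps_nth (FF p j) 0 = 1"
  unfolding FF_def by simp

lemma QQ_stable:
  assumes p: "p > 1" and "n \<le> N"
  shows "fps_nth (prod (FF p) {..<N}) n = fps_nth (prod (FF p) {..<n}) n"
  using assms(2)
proof (induction N rule: dec_induct)
  case base then show ?case by simp
next
  case (step N)
  define E where "E = FF p N - 1"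
  have "Suc N < 2 ^ Suc N" by (rule less_exp)
  also have "(2::nat) ^ Suc N \<le> p ^ Suc N" using p by (intro power_mono) auto
  finally have nM: "n < p ^ Suc N" using step by simp
  have lowE: "\<forall>k<Suc n. fps_nth E k = 0"
    using FF_low[of p _ N] FF_0[of p N] nM p unfolding E_def by auto
  have "prod (FF p) {..<Suc N} = prod (FF p) {..<N} + prod (FF p) {..<N} * E"
    by (simp add: E_def algebra_simps)
  hence "fps_nth (prod (FF p) {..<Suc N}) n = fps_nth (prod (FF p) {..<N}) n"
    using low_mult(1)[OF lowE, of "prod (FF p) {..<N}"] by simp
  with step show ?case by simp
qed



definition ff :: "nat \<Rightarrow> nat \<Rightarrow> complex \<Rightarrow> complex" where
  "ff p j z = (1 - z ^ (p ^ Suc j)) powr (- 1 / of_nat (p ^ Suc j))"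

lemma ff_fps:
  assumes "p > 0"
  shows "ff p j has_fps_expansion FF p j"
proof -
  have h1: "(\<lambda>z. - (z ^ (p ^ Suc j))) has_fps_expansion - (fps_X ^ (p ^ Suc j))"
    by (intro has_fps_expansion_minus has_fps_expansion_fps_X_power)
  have h2: "fps_nth (- (fps_X ^ (p ^ Suc j)) :: complex fps) 0 = 0"
    using assms by simp
  have "((\<lambda>x::complex. (1 + x) powr (- 1 / of_nat (p ^ Suc j))) \<circ> (\<lambda>z. - (z ^ (p ^ Suc j))))
      has_fps_expansion fps_compose (fps_binomial (- 1 / of_nat (p ^ Suc j))) (- (fps_X ^ (p ^ Suc j)))"
    by (rule has_fps_expansion_compose[OF has_fps_expansion_binomial_complex h1 h2])
  moreover have "((\<lambda>x::complex. (1 + x) powr (- 1 / of_nat (p ^ Suc j))) \<circ> (\<lambda>z. - (z ^ (p ^ Suc j)))) = ff p j"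
    by (rule ext) (simp add: ff_def)
  ultimately show ?thesis by (simp add: FF_def)
qed

lemma ff_holo:
  assumes "p > 0"
  shows "ff p j holomorphic_on ball 0 1"
proof -
  have nr: "1 - z ^ (p ^ Suc j) \<notin> \<real>\<^sub>\<le>\<^sub>0" if "z \<in> ball 0 1" for z :: complex
  proof -
    have z1: "norm z < 1" using that by simp
    have "norm (z ^ (p ^ Suc j)) = norm z ^ (p ^ Suc j)" by (rule norm_power)
    also have "\<dots> < 1 ^ (p ^ Suc j)"
      by (rule power_strict_mono[OF z1 norm_ge_zero]) (use assms in simp)
    finally have "norm (z ^ (p ^ Suc j)) < 1" by simp
    hence "Re (z ^ (p ^ Suc j)) < 1" using complex_Re_le_cmod[of "z ^ (p ^ Suc j)"] by linarith
    thus ?thesis by (simp add: complex_nonpos_Reals_iff)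
  qed
  have h1: "(\<lambda>z::complex. 1 - z ^ (p ^ Suc j)) holomorphic_on ball 0 1"
    by (intro holomorphic_on_diff holomorphic_on_const holomorphic_on_power holomorphic_on_ident)
  have "(\<lambda>z. (1 - z ^ (p ^ Suc j)) powr (\<lambda>_. - 1 / of_nat (p ^ Suc j) :: complex) z) holomorphic_on ball 0 1"
    by (rule holomorphic_on_powr[OF h1 holomorphic_on_const nr])
  thus ?thesis unfolding ff_def by (simp add: fun_eq_iff)
qed

lemma ff_bound:
  assumes p: "p > 1" and z: "norm z \<le> 1/2"
  shows "norm (ff p j z - 1) \<le> 3/2 * (1/2) ^ j"
proof -
  define M where "M = p ^ Suc j"
  define w where "w = z ^ M"
  have "Suc j < 2 ^ Suc j" by (rule less_exp)
  also have "(2::nat) ^ Suc j \<le> p ^ Suc j" using p by (intro power_mono) auto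
  finally have M1: "Suc j < M" unfolding M_def .
  have M2: "2 \<le> M" using M1 by simp
  have nw: "norm w = norm z ^ M" by (simp add: w_def norm_power)
  have "norm z ^ M \<le> (1/2) ^ M" using z by (intro power_mono) auto
  also have "(1/2::real) ^ M \<le> (1/2) ^ j" using M1 by (intro power_decreasing) auto
  finally have w1: "norm w \<le> (1/2) ^ j" using nw by simp
  have "norm z ^ M \<le> (1/2) ^ M" using z by (intro power_mono) auto
  also have "(1/2::real) ^ M \<le> (1/2) ^ 2" using M2 by (intro power_decreasing) auto
  finally have w2: "norm w \<le> 1/4" using nw by (simp add: power2_eq_square)
  have ne: "1 - w \<noteq> 0" using w2 by auto
  define u where "u = (- 1 / of_nat M) * Ln (1 - w)"
  have ffu: "ff p j z = exp u" unfolding ff_def u_def M_def[symmetric] w_def[symmetric]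
    using ne by (simp add: powr_def)
  have "norm (Ln (1 + (- w))) \<le> 2 * norm (- w)" using w2 by (intro norm_Ln_le) auto
  hence L: "norm (Ln (1 - w)) \<le> 2 * norm w" by simp
  have cM: "norm (- 1 / of_nat M :: complex) \<le> 1/2"
    using M2 by (simp add: norm_divide field_simps)
  have "norm u \<le> 1/2 * (2 * norm w)"
    unfolding u_def norm_mult by (intro mult_mono cM L) auto
  hence nu: "norm u \<le> norm w" by simp
  have "norm (exp u - 1) \<le> 3/2 * norm u" using nu w2 by (intro norm_exp_bounds(2)) auto
  also have "\<dots> \<le> 3/2 * (1/2) ^ j" using nu w1 by simp
  finally show ?thesis unfolding ffu by simp
qed

lemma Tp_eq: "Tp p = (\<lambda>z. prodinf (\<lambda>j. ff p j z))"
  by (rule ext) (simp only: Tp_def ff_def)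

lemma ulim:
  assumes p: "p > 1"
  shows "uniform_limit (cball 0 (1/2)) (\<lambda>N z. \<Prod>j<N. ff p j z) (Tp p) sequentially"
proof -
  let ?A = "cball (0::complex) (1/2)"
  have sumg: "summable (\<lambda>j. 3/2 * (1/2::real) ^ j)"
    by (intro summable_mult summable_geometric) simp
  have uc: "uniformly_convergent_on ?A (\<lambda>N x. \<Sum>n<N. norm (ff p n x - 1))"
  proof (rule Weierstrass_m_test'[OF _ sumg])
    fix n x assume "x \<in> ?A"
    hence "norm x \<le> 1/2" by simp
    thus "norm (norm (ff p n x - 1)) \<le> 3/2 * (1/2) ^ n" using ff_bound[OF p, of x n] by simp
  qed
  have cont: "continuous_on ?A (ff p n)" for n
  proof -
    have "?A \<subseteq> ball 0 1" by (rule cball_subset_ball_iff[THEN iffD2]) simp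
    hence "ff p n holomorphic_on ?A" using p by (intro holomorphic_on_subset[OF ff_holo]) auto
    thus ?thesis by (rule holomorphic_on_imp_continuous_on)
  qed
  have "uniformly_convergent_on ?A (\<lambda>N x. \<Prod>n<N. ff p n x)"
    by (rule uniformly_convergent_on_prod'[OF cont compact_cball uc])
  then obtain g where g: "uniform_limit ?A (\<lambda>N x. \<Prod>n<N. ff p n x) g sequentially"
    unfolding uniformly_convergent_on_def by blast
  have eq: "g z = Tp p z" if zA: "z \<in> ?A" for z
  proof -
    have "(\<lambda>N. \<Prod>n<N. ff p n z) \<longlonglongrightarrow> g z"
      by (rule tendsto_uniform_limitI[OF g zA])
    hence "(\<lambda>N. \<Prod>n<Suc N. ff p n z) \<longlonglongrightarrow> g z"
      by (rule LIMSEQ_Suc)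
    moreover have "summable (\<lambda>j. norm (ff p j z - 1))"
    proof (rule summable_comparison_test'[OF sumg])
      have "norm z \<le> 1/2" using zA by simp
      thus "norm (norm (ff p n z - 1)) \<le> 3/2 * (1/2) ^ n" for n using ff_bound[OF p, of z n] by simp
    qed
    hence "convergent_prod (\<lambda>j. ff p j z)"
      by (rule abs_convergent_prod_imp_convergent_prod[OF summable_imp_abs_convergent_prod])
    hence "(\<lambda>N. prod (\<lambda>j. ff p j z) {..N}) \<longlonglongrightarrow> prodinf (\<lambda>j. ff p j z)"
      by (rule convergent_prod_LIMSEQ)
    hence "(\<lambda>N. \<Prod>n<Suc N. ff p n z) \<longlonglongrightarrow> Tp p z"
      by (simp only: lessThan_Suc_atMost Tp_eq)
    ultimately show "g z = Tp p z"
      by (rule LIMSEQ_unique)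
  qed
  have "uniform_limit ?A (\<lambda>N x. \<Prod>n<N. ff p n x) g sequentially =
        uniform_limit ?A (\<lambda>N x. \<Prod>n<N. ff p n x) (Tp p) sequentially"
    by (rule uniform_limit_cong[OF always_eventually]) (blast, rule eq)
  from this[THEN iffD1, OF g] show ?thesis .
qed



theorem proposition1p8:
  fixes p n :: nat
  assumes "prime p"
  shows "\<exists>a::int. \<exists>k::nat. tp p n = of_int a / of_nat p ^ k"
proof -
  have p: "p > 1" using assms prime_gt_1_nat by blast
  hence p0: "p > 0" by simp
  define P where "P = (\<lambda>N z. \<Prod>j<N. ff p j z)"
  have hol: "P N holomorphic_on ball 0 (1/2)" for N
  proof -
    have "ff p j holomorphic_on ball 0 (1/2)" for j
      by (rule holomorphic_on_subset[OF ff_holo[OF p0]]) (auto simp: subset_iff)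
    thus ?thesis unfolding P_def by (intro holomorphic_on_prod) auto
  qed
  have ul: "uniform_limit (ball 0 (1/2)) P (Tp p) sequentially"
    unfolding P_def by (rule uniform_limit_on_subset[OF ulim[OF p] ball_subset_cball])
  have lim: "(\<lambda>N. (deriv ^^ n) (P N) 0) \<longlonglongrightarrow> (deriv ^^ n) (Tp p) 0"
    by (rule higher_deriv_complex_uniform_limit[OF ul always_eventually[OF allI[OF hol]]]) auto
  have fps: "P N has_fps_expansion prod (FF p) {..<N}" for N
    unfolding P_def by (rule has_fps_expansion_prod) (rule ff_fps[OF p0])
  define c where "c = fps_nth (prod (FF p) {..<n}) n"
  have "\<forall>\<^sub>F N in sequentially. (deriv ^^ n) (P N) 0 = fact n * c"
    unfolding eventually_sequentially
  proof (intro exI allI impI)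
    fix N assume N: "n \<le> N"
    have "fps_nth (prod (FF p) {..<N}) n = (deriv ^^ n) (P N) 0 / fact n"
      by (rule fps_nth_fps_expansion[OF fps])
    moreover have "fps_nth (prod (FF p) {..<N}) n = c"
      unfolding c_def by (rule QQ_stable[OF p N])
    ultimately show "(deriv ^^ n) (P N) 0 = fact n * c"
      by (simp add: field_simps)
  qed
  hence "(\<lambda>N. (deriv ^^ n) (P N) 0) \<longlonglongrightarrow> fact n * c"
    by (rule tendsto_eventually)
  hence "(deriv ^^ n) (Tp p) 0 = fact n * c"
    using lim LIMSEQ_unique by blast
  hence "tp p n = c" unfolding tp_def by simp
  moreover have "inR p c"
    using RC_prod[OF p0, of "{..<n}" "FF p"] RC_FF[OF p0] unfolding c_def RC_def by blast
  ultimately show ?thesis unfolding inR_def by blast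
qed

end
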